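(* Let $W_1,\ldots,W_n$ be i.i.d. mean-zero random variables. Suppose $\mathbb{P}(|W_i|\ge\tau)\le\alpha$ and $|W_i|\le M$ almost surely, for some $\tau,M>0$ and $\alpha\ge0$. Then for any $t>2M\alpha$, \[ \mathbb{P}\Big(\Big|\frac1n\sum_{i=1}^nW_i\Big|\ge t\Big)\le2e^{-nt^2/(8\tau^2)}+n\alpha. \] *)

theory Defs
  imports "HOL-Probability.Probability"
begin

end

theory Submission
  imports Defs
begin

theorem lemma15:
  fixes M :: "'a measure" and W :: "nat \<Rightarrow> 'a \<Rightarrow> real"
    and n :: nat and \<tau> Mb \<alpha> t :: real
  assumes "prob_space M"
    and meas: "\<And>i. i \<in> {1..n} \<Longrightarrow> W i \<in> borel_measurable M"
    and indep: "prob_space.indep_vars M (\<lambda>_. borel) W {1..n}"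
    and ident: "\<And>i. i \<in> {1..n} \<Longrightarrow> distr M borel (W i) = distr M borel (W 1)"
    and mean0: "\<And>i. i \<in> {1..n} \<Longrightarrow> integral\<^sup>L M (W i) = 0"
    and tail: "\<And>i. i \<in> {1..n} \<Longrightarrow> measure M {x \<in> space M. \<bar>W i x\<bar> \<ge> \<tau>} \<le> \<alpha>"
    and bdd: "\<And>i. i \<in> {1..n} \<Longrightarrow> (AE x in M. \<bar>W i x\<bar> \<le> Mb)"
    and "\<tau> > 0" and "Mb > 0" and "\<alpha> \<ge> 0"
    and "t > 2 * Mb * \<alpha>"
  shows "measure M {x \<in> space M. \<bar>(1 / real n) * (\<Sum>i=1..n. W i x)\<bar> \<ge> t}
           \<le> 2 * exp (- (real n * t\<^sup>2) / (8 * \<tau>\<^sup>2)) + real n * \<alpha>"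
proof (cases "n = 0")
  case True
  have "t > 0" using assms(9,10,11) by (smt (verit) mult_nonneg_nonneg)
  then show ?thesis using True by simp
next
  case False
  interpret P: prob_space M by fact
  define I where "I = {1..n}"
  have In: "card I = n" "finite I" unfolding I_def by auto
  define V where "V = (\<lambda>i x. if \<bar>W i x\<bar> < \<tau> then W i x else 0)"
  define U where "U = (\<lambda>i x. if \<tau> \<le> \<bar>W i x\<bar> then W i x else 0)"
  define S where "S = (\<lambda>i. {x \<in> space M. \<bar>W i x\<bar> \<ge> \<tau>})"
  have measV: "V i \<in> borel_measurable M" if "i \<in> I" for i
    using meas[of i] that unfolding V_def I_def by measurable
  have measU: "U i \<in> borel_measurable M" if "i \<in> I" for i
    using meas[of i] that unfolding U_def I_def by measurable
  have measS: "S i \<in> sets M" if "i \<in> I" for i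
    using meas[of i] that unfolding S_def I_def by measurable
  have indepV: "P.indep_vars (\<lambda>_. borel) V I"
  proof -
    have "P.indep_vars (\<lambda>_. borel) (\<lambda>i x. (\<lambda>y. if \<bar>y\<bar> < \<tau> then y else 0) (W i x)) I"
      by (rule P.indep_vars_compose2[OF indep[folded I_def]]) measurable
    then show ?thesis unfolding V_def .
  qed
  interpret H: Hoeffding_ineq M I V "\<lambda>_. -\<tau>" "\<lambda>_. \<tau>" "\<Sum>i\<in>I. P.expectation (V i)"
    apply unfold_locales
    using In indepV assms(8) by (auto simp: V_def)
  have intW: "integrable M (W i)" if "i \<in> I" for i
    using bdd[of i] meas[of i] that unfolding I_def
    by (intro P.integrable_const_bound[where B=Mb]) auto
  have intU: "integrable M (U i)" if "i \<in> I" for i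
    using bdd[of i] measU[of i] that assms(9) unfolding I_def
    by (intro P.integrable_const_bound[where B=Mb]) (auto simp: U_def elim!: eventually_mono)
  have intV: "integrable M (V i)" if "i \<in> I" for i
    using bdd[of i] measV[of i] that assms(9) unfolding I_def
    by (intro P.integrable_const_bound[where B=Mb]) (auto simp: V_def elim!: eventually_mono)
  have EV: "\<bar>P.expectation (V i)\<bar> \<le> Mb * \<alpha>" if i: "i \<in> I" for i
  proof -
    have "W i = (\<lambda>x. V i x + U i x)" unfolding V_def U_def by auto
    then have "P.expectation (W i) = P.expectation (V i) + P.expectation (U i)"
      using intU intV i by (metis Bochner_Integration.integral_add)
    then have e: "P.expectation (V i) = - P.expectation (U i)"
      using mean0[of i] i unfolding I_def by simp
    have "\<bar>P.expectation (U i)\<bar> \<le> P.expectation (\<lambda>x. \<bar>U i x\<bar>)"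
      using integral_abs_bound[of M "U i"] by simp
    also have "\<dots> \<le> P.expectation (\<lambda>x. Mb * indicator (S i) x)"
    proof (rule integral_mono_AE)
      show "integrable M (\<lambda>x. \<bar>U i x\<bar>)" using intU[OF i] by auto
      show "integrable M (\<lambda>x. Mb * indicator (S i) x)" using measS[OF i] by (intro integrable_mult_right) (simp add: P.emeasure_eq_measure)
      show "AE x in M. \<bar>U i x\<bar> \<le> Mb * indicator (S i) x"
        using bdd[of i] i assms(9) unfolding I_def
        by (auto simp: U_def S_def elim!: eventually_mono)
    qed
    also have "\<dots> = Mb * measure M (S i)" using measS[OF i] by simp
    also have "\<dots> \<le> Mb * \<alpha>" using tail[of i] i assms(9) unfolding S_def I_def
      by (intro mult_left_mono) auto
    finally show ?thesis using e by simp
  qed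
  have mu: "\<bar>\<Sum>i\<in>I. P.expectation (V i)\<bar> \<le> real n * (Mb * \<alpha>)"
  proof -
    have "\<bar>\<Sum>i\<in>I. P.expectation (V i)\<bar> \<le> (\<Sum>i\<in>I. \<bar>P.expectation (V i)\<bar>)" by (rule sum_abs)
    also have "\<dots> \<le> (\<Sum>i\<in>I. Mb * \<alpha>)" using EV by (intro sum_mono) auto
    finally show ?thesis using In by simp
  qed
  define \<epsilon> where "\<epsilon> = real n * t / 2"
  have npos: "real n > 0" using False by simp
  have tpos: "t > 0" using assms(9,10,11) by (smt (verit) mult_nonneg_nonneg)
  have hoef: "P.prob {x\<in>space M. \<bar>(\<Sum>i\<in>I. V i x) - (\<Sum>i\<in>I. P.expectation (V i))\<bar> \<ge> \<epsilon>}
      \<le> 2 * exp (- (real n * t\<^sup>2) / (8 * \<tau>\<^sup>2))"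
  proof -
    have "P.prob {x\<in>space M. \<bar>(\<Sum>i\<in>I. V i x) - (\<Sum>i\<in>I. P.expectation (V i))\<bar> \<ge> \<epsilon>}
      \<le> 2 * exp (-2 * \<epsilon>\<^sup>2 / (\<Sum>i\<in>I. (\<tau> - - \<tau>)\<^sup>2))"
      using npos tpos assms(8) In by (intro H.Hoeffding_ineq_abs_ge) (auto simp: \<epsilon>_def)
    also have "-2 * \<epsilon>\<^sup>2 / (\<Sum>i\<in>I. (\<tau> - - \<tau>)\<^sup>2) = - (real n * t\<^sup>2) / (8 * \<tau>\<^sup>2)"
      using In npos assms(8) by (simp add: \<epsilon>_def power2_eq_square field_simps)
    finally show ?thesis .
  qed
  have sub: "{x \<in> space M. \<bar>(1 / real n) * (\<Sum>i=1..n. W i x)\<bar> \<ge> t} \<subseteq>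
     (\<Union>i\<in>I. S i) \<union> {x\<in>space M. \<bar>(\<Sum>i\<in>I. V i x) - (\<Sum>i\<in>I. P.expectation (V i))\<bar> \<ge> \<epsilon>}"
  proof
    fix x assume x: "x \<in> {x \<in> space M. \<bar>(1 / real n) * (\<Sum>i=1..n. W i x)\<bar> \<ge> t}"
    show "x \<in> (\<Union>i\<in>I. S i) \<union> {x\<in>space M. \<bar>(\<Sum>i\<in>I. V i x) - (\<Sum>i\<in>I. P.expectation (V i))\<bar> \<ge> \<epsilon>}"
    proof (cases "x \<in> (\<Union>i\<in>I. S i)")
      case False
      then have "\<forall>i\<in>I. V i x = W i x" using x unfolding S_def V_def by auto
      then have eq: "(\<Sum>i\<in>I. V i x) = (\<Sum>i=1..n. W i x)" unfolding I_def by simp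
      have "\<bar>\<Sum>i=1..n. W i x\<bar> \<ge> real n * t"
        using x npos by (auto simp: abs_mult field_simps)
      moreover have "real n * (Mb * \<alpha>) \<le> real n * t / 2" using npos assms(11) by simp
      ultimately have "\<bar>(\<Sum>i\<in>I. V i x) - (\<Sum>i\<in>I. P.expectation (V i))\<bar> \<ge> \<epsilon>"
        using mu eq unfolding \<epsilon>_def by linarith
      then show ?thesis using x by auto
    qed simp
  qed
  have "measure M {x \<in> space M. \<bar>(1 / real n) * (\<Sum>i=1..n. W i x)\<bar> \<ge> t}
     \<le> measure M ((\<Union>i\<in>I. S i) \<union> {x\<in>space M. \<bar>(\<Sum>i\<in>I. V i x) - (\<Sum>i\<in>I. P.expectation (V i))\<bar> \<ge> \<epsilon>})"
    using measS measV In by (intro P.finite_measure_mono[OF sub]) auto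
  also have "\<dots> \<le> measure M (\<Union>i\<in>I. S i) + measure M {x\<in>space M. \<bar>(\<Sum>i\<in>I. V i x) - (\<Sum>i\<in>I. P.expectation (V i))\<bar> \<ge> \<epsilon>}"
    by (rule measure_Un_le) (use measS measV In in auto)
  also have "measure M (\<Union>i\<in>I. S i) \<le> (\<Sum>i\<in>I. measure M (S i))"
    using measS In by (intro P.finite_measure_subadditive_finite) auto
  also have "\<dots> \<le> (\<Sum>i\<in>I. \<alpha>)" using tail unfolding S_def I_def by (intro sum_mono) auto
  also have "\<dots> = real n * \<alpha>" using In by simp
  finally show ?thesis using hoef by linarith
qed

end
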